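(* Let $\|\cdot\|$ be a URTC-norm on $\mathbb{R}^2$, let $d>0$, and let $b_1,b_2\in\mathbb{R}^2$ with $\|b_1\|=\|b_2\|=\|b_1-b_2\|=d$. Then the triple $(0,b_1,b_2)$ can be extended to a $d$-probe $(0,b_1,b_2,b_3,c_1,c_2,c_3)$, and in every such $d$-probe necessarily $b_3=b_1+b_2$. Moreover, $b_1+b_2\neq 0$.
   Context: A norm $\|\cdot\|$ on $\mathbb{R}^2$ is called a URTC-norm if for every $a,b\in\mathbb{R}^2$ with $\|a-b\|=1$ the system $\|a-x\|=1$, $\|b-x\|=1$ is satisfied by exactly two points $x\in\mathbb{R}^2$. For $d>0$, a 7-tuple $(a,b_1,b_2,b_3,c_1,c_2,c_3)$ of points of $\mathbb{R}^2$ is a $d$-probe if $d=\|a-b_1\|=\|a-b_2\|=\|b_1-b_2\|=\|b_1-b_3\|=\|b_2-b_3\|=\|a-c_1\|=\|a-c_2\|=\|c_1-c_2\|=\|c_1-c_3\|=\|c_2-c_3\|=\|b_3-c_3\|$. *)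

theory Defs
  imports "HOL-Analysis.Analysis"
begin

definition is_norm :: "(real^2 \<Rightarrow> real) \<Rightarrow> bool" where
  "is_norm N \<longleftrightarrow>
     (\<forall>x. N x = 0 \<longleftrightarrow> x = 0) \<and>
     (\<forall>c x. N (c *\<^sub>R x) = \<bar>c\<bar> * N x) \<and>
     (\<forall>x y. N (x + y) \<le> N x + N y)"

definition URTC_norm :: "(real^2 \<Rightarrow> real) \<Rightarrow> bool" where
  "URTC_norm N \<longleftrightarrow> is_norm N \<and>
     (\<forall>a b. N (a - b) = 1 \<longrightarrow> card {x. N (a - x) = 1 \<and> N (b - x) = 1} = 2)"

definition probe :: "(real^2 \<Rightarrow> real) \<Rightarrow> real \<Rightarrow> real^2 \<Rightarrow> real^2 \<Rightarrow> real^2 \<Rightarrow> real^2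
                      \<Rightarrow> real^2 \<Rightarrow> real^2 \<Rightarrow> real^2 \<Rightarrow> bool" where
  "probe N d a b1 b2 b3 c1 c2 c3 \<longleftrightarrow>
     d = N (a - b1) \<and> d = N (a - b2) \<and> d = N (b1 - b2) \<and> d = N (b1 - b3) \<and>
     d = N (b2 - b3) \<and> d = N (a - c1) \<and> d = N (a - c2) \<and> d = N (c1 - c2) \<and>
     d = N (c1 - c3) \<and> d = N (c2 - c3) \<and> d = N (b3 - c3)"

end

theory Submission
  imports Defs
begin

lemma nN0: assumes "is_norm N" shows "N 0 = 0"
  using assms unfolding is_norm_def by auto

lemma nscale: assumes "is_norm N" shows "N (c *\<^sub>R x) = \<bar>c\<bar> * N x"
  using assms unfolding is_norm_def by auto

lemma ntri: assumes "is_norm N" shows "N (x + y) \<le> N x + N y"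
  using assms unfolding is_norm_def by auto

lemma nzero: assumes "is_norm N" shows "N x = 0 \<longleftrightarrow> x = 0"
  using assms unfolding is_norm_def by auto

lemma nminus: assumes "is_norm N" shows "N (- x) = N x"
  using nscale[OF assms, of "-1" x] by simp

lemma nsub: assumes "is_norm N" shows "N (x - y) = N (y - x)"
  using nminus[OF assms, of "x - y"] by simp

lemma nnonneg: assumes "is_norm N" shows "N x \<ge> 0"
  using ntri[OF assms, of x "-x"] nminus[OF assms, of x] nN0[OF assms] by simp

lemma npos: assumes "is_norm N" "x \<noteq> 0" shows "N x > 0"
  using nnonneg[OF assms(1), of x] nzero[OF assms(1), of x] assms(2) by linarith

lemma ntri_sub: assumes "is_norm N" shows "N x - N y \<le> N (x - y)"
  using ntri[OF assms, of "x - y" y] by simp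

lemma vec2_decomp: "(x::real^2) = x$1 *\<^sub>R axis 1 1 + x$2 *\<^sub>R axis 2 1"
  by (simp add: vec_eq_iff forall_2 axis_def)

lemma nupper: assumes "is_norm N"
  shows "N x \<le> (N (axis 1 1) + N (axis 2 1)) * norm (x::real^2)"
proof -
  have "N x \<le> N (x$1 *\<^sub>R axis 1 1) + N (x$2 *\<^sub>R axis 2 1)"
    using ntri[OF assms] vec2_decomp[of x] by metis
  also have "\<dots> = \<bar>x$1\<bar> * N (axis 1 1) + \<bar>x$2\<bar> * N (axis 2 1)"
    by (simp add: nscale[OF assms])
  also have "\<dots> \<le> norm x * N (axis 1 1) + norm x * N (axis 2 1)"
    by (intro add_mono mult_right_mono component_le_norm_cart nnonneg[OF assms])
  finally show ?thesis by (simp add: algebra_simps)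
qed

lemma ncont: assumes "is_norm N" shows "continuous_on S N"
proof -
  define K where "K = N (axis 1 1) + N (axis 2 1)"
  have K0: "K \<ge> 0" unfolding K_def using nnonneg[OF assms] by (simp add: add_nonneg_nonneg)
  have L: "\<bar>N x - N y\<bar> \<le> K * norm (x - y)" for x y
  proof -
    have "N x - N y \<le> K * norm (x - y)" using ntri_sub[OF assms, of x y] nupper[OF assms, of "x - y"]
      unfolding K_def by linarith
    moreover have "N y - N x \<le> K * norm (x - y)" using ntri_sub[OF assms, of y x] nupper[OF assms, of "y - x"]
      unfolding K_def by (simp add: norm_minus_commute)
    ultimately show ?thesis by linarith
  qed
  show ?thesis unfolding continuous_on_iff
  proof (intro ballI allI impI)
    fix x e assume "e > (0::real)"
    show "\<exists>d>0. \<forall>x'\<in>S. dist x' x < d \<longrightarrow> dist (N x') (N x) < e"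
    proof (intro exI[of _ "e / (K + 1)"] conjI ballI impI)
      show "e / (K + 1) > 0" using \<open>e > 0\<close> K0 by simp
      fix x' assume "dist x' x < e / (K + 1)"
      hence "(K + 1) * dist x' x < e" using K0 by (simp add: field_simps)
      moreover have "dist (N x') (N x) \<le> K * dist x' x" using L[of x' x] by (simp add: dist_real_def dist_norm)
      moreover have "K * dist x' x \<le> (K + 1) * dist x' x" by (simp add: distrib_right)
      ultimately show "dist (N x') (N x) < e" by linarith
    qed
  qed
qed

lemma nlower: assumes "is_norm N"
  obtains m where "m > 0" "\<And>x::real^2. N x \<ge> m * norm x"
proof -
  have "compact (sphere (0::real^2) 1)" by simp
  moreover have "sphere (0::real^2) 1 \<noteq> {}" by simp
  ultimately obtain z where z: "z \<in> sphere 0 1" "\<And>y. y \<in> sphere 0 1 \<Longrightarrow> N z \<le> N y"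
    using continuous_attains_inf[of "sphere (0::real^2) 1" N] ncont[OF assms] by blast
  have "z \<noteq> 0" using z(1) by auto
  hence m: "N z > 0" using npos[OF assms] by simp
  have "N x \<ge> N z * norm x" for x :: "real^2"
  proof (cases "x = 0")
    case True then show ?thesis by (simp add: nN0[OF assms])
  next
    case False
    have "N (x /\<^sub>R norm x) \<ge> N z" using z(2)[of "x /\<^sub>R norm x"] False by simp
    hence "N x / norm x \<ge> N z" using nscale[OF assms, of "inverse (norm x)" x] by (simp add: divide_inverse_commute)
    thus ?thesis using False by (simp add: field_simps)
  qed
  thus ?thesis using that m by blast
qed

definition det2 :: "real^2 \<Rightarrow> real^2 \<Rightarrow> real" where
  "det2 x y = x$1 * y$2 - x$2 * y$1"

lemma det2_collinear: assumes "det2 x y = 0" "x \<noteq> 0"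
  shows "\<exists>l. y = l *\<^sub>R x"
proof (cases "x$1 = 0")
  case False
  have "y = (y$1 / x$1) *\<^sub>R x"
    using assms(1) False unfolding det2_def by (simp add: vec_eq_iff forall_2 field_simps)
  thus ?thesis by blast
next
  case True
  hence "x$2 \<noteq> 0" using assms(2) by (auto simp: vec_eq_iff forall_2)
  hence "y = (y$2 / x$2) *\<^sub>R x"
    using assms(1) True unfolding det2_def by (simp add: vec_eq_iff forall_2 field_simps)
  thus ?thesis by blast
qed

lemma noncol: assumes "is_norm N" "d > 0" "N x = d" "N y = d" "N (x - y) = d"
  shows "det2 x y \<noteq> 0"
proof
  assume "det2 x y = 0"
  moreover have "x \<noteq> 0" using assms nN0[OF assms(1)] by auto
  ultimately obtain l where l: "y = l *\<^sub>R x" using det2_collinear by blast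
  have "\<bar>l\<bar> * d = d" using assms(3,4) l nscale[OF assms(1)] by simp
  hence l1: "\<bar>l\<bar> = 1" using assms(2) by simp
  have "x - y = (1 - l) *\<^sub>R x" using l by (simp add: algebra_simps)
  hence "\<bar>1 - l\<bar> * d = d" using assms(3,5) nscale[OF assms(1)] by simp
  hence "\<bar>1 - l\<bar> = 1" using assms(2) by simp
  thus False using l1 by (auto simp: abs_if split: if_splits)
qed

lemma card_d: assumes "URTC_norm N" "d > 0" "N (a - b) = d"
  shows "card {z. N (a - z) = d \<and> N (b - z) = d} = 2"
proof -
  have nN: "is_norm N" using assms(1) unfolding URTC_norm_def by simp
  define A where "A = {x. N (inverse d *\<^sub>R a - x) = 1 \<and> N (inverse d *\<^sub>R b - x) = 1}"
  have sc: "N (inverse d *\<^sub>R u - inverse d *\<^sub>R v) = N (u - v) / d" for u v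
  proof -
    have "inverse d *\<^sub>R u - inverse d *\<^sub>R v = inverse d *\<^sub>R (u - v)" by (simp add: algebra_simps)
    moreover have "N (inverse d *\<^sub>R (u - v)) = N (u - v) / d"
      using nscale[OF nN, of "inverse d" "u - v"] assms(2) by (simp add: divide_inverse_commute)
    ultimately show ?thesis by simp
  qed
  have "N (inverse d *\<^sub>R a - inverse d *\<^sub>R b) = 1" using sc assms by simp
  hence cA: "card A = 2" using assms(1) unfolding URTC_norm_def A_def by blast
  have eq: "{z. N (a - z) = d \<and> N (b - z) = d} = (\<lambda>p. d *\<^sub>R p) ` A"
  proof (rule set_eqI, rule iffI)
    fix z assume "z \<in> {z. N (a - z) = d \<and> N (b - z) = d}"
    hence "inverse d *\<^sub>R z \<in> A" unfolding A_def using sc[of a z] sc[of b z] assms(2) by simp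
    moreover have "z = d *\<^sub>R (inverse d *\<^sub>R z)" using assms(2) by simp
    ultimately show "z \<in> (\<lambda>p. d *\<^sub>R p) ` A" by blast
  next
    fix z assume "z \<in> (\<lambda>p. d *\<^sub>R p) ` A"
    then obtain p where p: "p \<in> A" "z = d *\<^sub>R p" by blast
    have "p = inverse d *\<^sub>R z" using p(2) assms(2) by simp
    thus "z \<in> {z. N (a - z) = d \<and> N (b - z) = d}" using p(1) sc[of a z] sc[of b z] assms(2)
      unfolding A_def by simp
  qed
  have "inj_on (\<lambda>p. d *\<^sub>R p) A" using assms(2) by (simp add: inj_on_def)
  thus ?thesis using eq cA card_image by metis
qed

lemma card2_mem: assumes "card S = 2" "y \<in> S" "w \<in> S" "y \<noteq> w" "z \<in> S"
  shows "z = y \<or> z = w"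
proof -
  obtain p q where "S = {p, q}" "p \<noteq> q" using assms(1) card_2_iff by metis
  thus ?thesis using assms by auto
qed

lemma uniq2: assumes "URTC_norm N" "d > 0" "N (a - b) = d"
    "N (a - y) = d" "N (b - y) = d" "N (a - z) = d" "N (b - z) = d"
  shows "z = y \<or> z = a + b - y"
proof -
  have nN: "is_norm N" using assms(1) unfolding URTC_norm_def by simp
  have w1: "N (a - (a + b - y)) = d" using assms(5) nsub[OF nN, of b y] by (simp add: algebra_simps)
  have w2: "N (b - (a + b - y)) = d" using assms(4) nsub[OF nN, of a y] by (simp add: algebra_simps)
  have "y \<noteq> a + b - y"
  proof
    assume "y = a + b - y"
    hence "a - y = (1/2) *\<^sub>R (a - b)" by (simp add: algebra_simps vec_eq_iff)
    hence "N (a - y) = d / 2" using nscale[OF nN, of "1/2" "a - b"] assms(3) by simp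
    thus False using assms(2,4) by simp
  qed
  thus ?thesis using card2_mem[OF card_d[OF assms(1-3)], of y "a + b - y" z] assms w1 w2 by blast
qed

lemma exist2: assumes "URTC_norm N" "d > 0" "N (a - b) = d"
  shows "\<exists>y. N (a - y) = d \<and> N (b - y) = d"
proof -
  have "{z. N (a - z) = d \<and> N (b - z) = d} \<noteq> {}" using card_d[OF assms] by (metis card.empty zero_neq_numeral)
  thus ?thesis by blast
qed

lemma ncomp: assumes "is_norm N" "continuous_on S f" shows "continuous_on S (\<lambda>x. N (f x))"
  using continuous_on_compose2[OF ncont[OF assms(1)] assms(2) subset_UNIV] .

lemma existence:
  fixes N :: "real^2 \<Rightarrow> real" and d :: real and b1 b2 :: "real^2"
  assumes U: "URTC_norm N" and d0: "d > 0"
    and h1: "N b1 = d" and h2: "N b2 = d" and h12: "N (b1 - b2) = d"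
  shows "\<exists>c1 c2. N c1 = d \<and> N c2 = d \<and> N (c1 - c2) = d \<and> N (b1 + b2 - c1 - c2) = d"
proof -
  have nN: "is_norm N" using U unfolding URTC_norm_def by simp
  define s where "s = det2 b1 b2"
  have s0: "s \<noteq> 0" unfolding s_def using noncol[OF nN d0 h1 h2 h12] .
  define D where "D x y = s * det2 x y" for x y
  define P where "P x y \<longleftrightarrow> N y = d \<and> N (x - y) = d" for x y
  define Sph where "Sph = {x. N x = d}"
  have Dm: "D x (x - y) = - D x y" for x y unfolding D_def det2_def by (simp add: algebra_simps)
  have Dnz: "D x y \<noteq> 0" if "x \<in> Sph" "P x y" for x y
    using noncol[OF nN d0, of x y] that s0 unfolding D_def P_def Sph_def by simp
  have Pm: "P x (x - y)" if "x \<in> Sph" "P x y" for x y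
    using that unfolding P_def Sph_def by simp
  have ex1: "\<exists>!y. P x y \<and> D x y > 0" if xS: "x \<in> Sph" for x
  proof -
    have "N (x - 0) = d" using xS unfolding Sph_def by simp
    then obtain y where "N (x - y) = d \<and> N (0 - y) = d" using exist2[OF U d0] by blast
    hence y: "P x y" unfolding P_def using nminus[OF nN, of y] by simp
    have uq: "y' = y \<or> y' = x - y" if "P x y'" for y'
    proof -
      have "y' = y \<or> y' = x + 0 - y"
        using uniq2[OF U d0 \<open>N (x - 0) = d\<close>, of y y'] y that nminus[OF nN] unfolding P_def by simp
      thus ?thesis by simp
    qed
    show ?thesis
    proof (cases "D x y > 0")
      case True
      show ?thesis
      proof (rule ex1I[of _ y])
        show "P x y \<and> D x y > 0" using y True by simp
        fix y' assume "P x y' \<and> D x y' > 0"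
        thus "y' = y" using uq[of y'] Dm[of x y] True by auto
      qed
    next
      case False
      hence F: "D x y < 0" using Dnz[OF xS y] by linarith
      show ?thesis
      proof (rule ex1I[of _ "x - y"])
        show "P x (x - y) \<and> D x (x - y) > 0" using Pm[OF xS y] F Dm[of x y] by simp
        fix y' assume "P x y' \<and> D x y' > 0"
        thus "y' = x - y" using uq[of y'] F by auto
      qed
    qed
  qed
  define g where "g x = (THE y. P x y \<and> D x y > 0)" for x
  have gP: "P x (g x) \<and> D x (g x) > 0" if "x \<in> Sph" for x
    unfolding g_def using theI'[OF ex1[OF that]] .
  have gU: "g x = y" if "x \<in> Sph" "P x y" "D x y > 0" for x y
    unfolding g_def using the1_equality[OF ex1[OF that(1)]] that by blast
  obtain m where m: "m > 0" "\<And>x::real^2. N x \<ge> m * norm x" using nlower[OF nN] by blast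
  have gcont: "continuous_on Sph g"
  proof (rule continuous_from_closed_graph[of "cball 0 (d / m)"])
    show "compact (cball (0::real^2) (d / m))" by simp
    show "g \<in> Sph \<rightarrow> cball 0 (d / m)"
    proof
      fix x assume "x \<in> Sph"
      hence "N (g x) = d" using gP unfolding P_def by blast
      hence "m * norm (g x) \<le> d" using m(2)[of "g x"] by simp
      thus "g x \<in> cball 0 (d / m)" using m(1) by (simp add: field_simps)
    qed
    have eq: "(\<lambda>x. (x, g x)) ` Sph = {p. N (fst p) = d \<and> N (snd p) = d \<and> N (fst p - snd p) = d \<and> 0 \<le> D (fst p) (snd p)}"
    proof (rule set_eqI, rule iffI)
      fix p assume "p \<in> (\<lambda>x. (x, g x)) ` Sph"
      then obtain x where "x \<in> Sph" "p = (x, g x)" by blast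
      thus "p \<in> {p. N (fst p) = d \<and> N (snd p) = d \<and> N (fst p - snd p) = d \<and> 0 \<le> D (fst p) (snd p)}"
        using gP[of x] unfolding P_def Sph_def by auto
    next
      fix p assume "p \<in> {p. N (fst p) = d \<and> N (snd p) = d \<and> N (fst p - snd p) = d \<and> 0 \<le> D (fst p) (snd p)}"
      hence p: "fst p \<in> Sph" "P (fst p) (snd p)" "0 \<le> D (fst p) (snd p)" unfolding P_def Sph_def by auto
      hence "D (fst p) (snd p) > 0" using Dnz[OF p(1,2)] by linarith
      hence "g (fst p) = snd p" using gU p by blast
      hence "p = (fst p, g (fst p))" by simp
      thus "p \<in> (\<lambda>x. (x, g x)) ` Sph" using p(1) by blast
    qed
    have cf: "continuous_on UNIV (\<lambda>p::((real^2) \<times> (real^2)). N (fst p))"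
      by (intro ncomp[OF nN] continuous_intros)
    have cs: "continuous_on UNIV (\<lambda>p::((real^2) \<times> (real^2)). N (snd p))"
      by (intro ncomp[OF nN] continuous_intros)
    have cd: "continuous_on UNIV (\<lambda>p::((real^2) \<times> (real^2)). N (fst p - snd p))"
      by (intro ncomp[OF nN] continuous_intros)
    have cD: "continuous_on UNIV (\<lambda>p::((real^2) \<times> (real^2)). D (fst p) (snd p))"
      unfolding D_def det2_def by (intro continuous_intros)
    show "closed ((\<lambda>x. (x, g x)) ` Sph)" unfolding eq
      by (intro closed_Collect_conj closed_Collect_eq closed_Collect_le cf cs cd cD continuous_intros)
  qed
  define v where "v t = cos (pi * t) *\<^sub>R b1 + sin (pi * t) *\<^sub>R b2" for t
  have vnz: "v t \<noteq> 0" for t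
  proof
    assume "v t = 0"
    hence a: "det2 b1 (v t) = 0" "det2 (v t) b2 = 0" unfolding det2_def by auto
    have "det2 b1 (v t) = sin (pi * t) * s" "det2 (v t) b2 = cos (pi * t) * s"
      unfolding s_def v_def det2_def by (simp_all add: algebra_simps)
    hence "sin (pi * t) = 0" "cos (pi * t) = 0" using a s0 by auto
    thus False using sin_cos_squared_add[of "pi * t"] by simp
  qed
  define c where "c t = (d / N (v t)) *\<^sub>R v t" for t
  have cS: "c t \<in> Sph" for t
  proof -
    have "N (v t) > 0" using npos[OF nN vnz] .
    thus ?thesis unfolding c_def Sph_def using nscale[OF nN, of "d / N (v t)" "v t"] d0 by simp
  qed
  have vcont: "continuous_on {0..1} v" unfolding v_def by (intro continuous_intros)
  have ccont: "continuous_on {0..1} c" unfolding c_def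
    by (intro continuous_intros ncomp[OF nN] vcont) (metis npos[OF nN vnz] less_irrefl)
  define psi where "psi t = N (b1 + b2 - c t - g (c t))" for t
  have gc: "continuous_on {0..1} (\<lambda>t. g (c t))"
    using continuous_on_compose2[OF gcont ccont] cS by blast
  have pcont: "continuous_on {0..1} psi" unfolding psi_def
    by (intro ncomp[OF nN] continuous_intros ccont gc)
  have c0: "c 0 = b1" unfolding c_def v_def using h1 d0 by simp
  have c1: "c 1 = - b1" unfolding c_def v_def using h1 d0 nminus[OF nN, of b1] by simp
  have b1S: "b1 \<in> Sph" "- b1 \<in> Sph" unfolding Sph_def using h1 nminus[OF nN, of b1] by auto
  have ss: "s * s > 0" using s0 by (metis not_real_square_gt_zero)
  have Db: "D b1 b2 > 0" "D (- b1) (- b2) > 0" unfolding D_def using ss by (simp_all add: s_def det2_def)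
  have g0: "g b1 = b2"
    by (rule gU[OF b1S(1)]) (use h2 h12 Db in \<open>auto simp: P_def\<close>)
  have g1: "g (- b1) = - b2"
  proof (rule gU[OF b1S(2)])
    show "P (- b1) (- b2)" unfolding P_def using h2 h12 nminus[OF nN] nsub[OF nN, of b1 b2] by simp
    show "D (- b1) (- b2) > 0" using Db by simp
  qed
  have p0: "psi 0 = 0" unfolding psi_def c0 g0 using nN0[OF nN] by simp
  have "2 * d \<le> N (b1 + b2) + d"
  proof -
    have "N (2 *\<^sub>R b1) = 2 * d" using nscale[OF nN, of 2 b1] h1 by simp
    moreover have "2 *\<^sub>R b1 = (b1 + b2) + (b1 - b2)" by (simp add: algebra_simps scaleR_2)
    ultimately show ?thesis using ntri[OF nN, of "b1 + b2" "b1 - b2"] h12 by simp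
  qed
  moreover have "psi 1 = 2 * N (b1 + b2)"
  proof -
    have "b1 + b2 - c 1 - g (c 1) = 2 *\<^sub>R (b1 + b2)" unfolding c1 g1 by (simp add: algebra_simps scaleR_2)
    thus ?thesis unfolding psi_def using nscale[OF nN, of 2 "b1 + b2"] by simp
  qed
  ultimately have p1: "d \<le> psi 1" using d0 nnonneg[OF nN, of "b1 + b2"] by linarith
  obtain t where "0 \<le> t" "t \<le> 1" "psi t = d"
    using IVT'[of psi 0 d 1, OF _ p1 _ pcont] p0 d0 by auto
  moreover have "P (c t) (g (c t))" using gP[OF cS] by blast
  ultimately show ?thesis
    using cS[of t] unfolding psi_def P_def Sph_def by (intro exI[of _ "c t"] exI[of _ "g (c t)"]) simp
qed

theorem lemma4:
  fixes N :: "real^2 \<Rightarrow> real" and d :: real and b1 b2 :: "real^2"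
  assumes "URTC_norm N" and "d > 0"
    and "N b1 = d" and "N b2 = d" and "N (b1 - b2) = d"
  shows "(\<exists>b3 c1 c2 c3. probe N d 0 b1 b2 b3 c1 c2 c3)
       \<and> (\<forall>b3 c1 c2 c3. probe N d 0 b1 b2 b3 c1 c2 c3 \<longrightarrow> b3 = b1 + b2)
       \<and> b1 + b2 \<noteq> 0"
proof (intro conjI)
  have nN: "is_norm N" using assms(1) unfolding URTC_norm_def by simp
  have nm: "N (- x) = N x" for x using nminus[OF nN] .
  have ns: "N (x - y) = N (y - x)" for x y using nsub[OF nN] .
  show "b1 + b2 \<noteq> 0"
  proof
    assume "b1 + b2 = 0"
    hence "b1 - b2 = 2 *\<^sub>R b1" by (simp add: algebra_simps scaleR_2 eq_neg_iff_add_eq_0)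
    hence "N (b1 - b2) = 2 * d" using nscale[OF nN, of 2 b1] assms(3) by simp
    thus False using assms(2,5) by simp
  qed
  show "\<exists>b3 c1 c2 c3. probe N d 0 b1 b2 b3 c1 c2 c3"
  proof -
    obtain c1 c2 where c: "N c1 = d" "N c2 = d" "N (c1 - c2) = d" "N (b1 + b2 - c1 - c2) = d"
      using existence[OF assms] by blast
    have e: "b1 + b2 - (c1 + c2) = b1 + b2 - c1 - c2" by simp
    have "probe N d 0 b1 b2 (b1 + b2) c1 c2 (c1 + c2)"
      unfolding probe_def by (intro conjI) (simp_all add: nm c assms e)
    thus ?thesis by blast
  qed
  show "\<forall>b3 c1 c2 c3. probe N d 0 b1 b2 b3 c1 c2 c3 \<longrightarrow> b3 = b1 + b2"
  proof (intro allI impI)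
    fix b3 c1 c2 c3 assume p: "probe N d 0 b1 b2 b3 c1 c2 c3"
    have pp: "d = N (0 - c1)" "d = N (0 - c2)" "d = N (c1 - c2)" "d = N (c1 - c3)" "d = N (c2 - c3)"
      "d = N (b3 - c3)" "d = N (b1 - b3)" "d = N (b2 - b3)"
      using p unfolding probe_def by blast+
    have q: "N c1 = d" "N c2 = d" "N (c1 - c2) = d" "N (c1 - c3) = d" "N (c2 - c3) = d"
      "N (b3 - c3) = d" "N (b1 - b3) = d" "N (b2 - b3) = d"
      using pp(3-8) pp(1,2) nm[of c1] nm[of c2] by simp_all
    have "b3 = 0 \<or> b3 = b1 + b2 - 0"
      using uniq2[OF assms(1,2,5), of 0 b3] assms(3,4) q by simp
    moreover have "b3 \<noteq> 0"
    proof
      assume "b3 = 0"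
      hence c3n: "N c3 = d" using q(6) nm by (metis diff_0)
      hence "c3 \<noteq> 0" using assms(2) nN0[OF nN] by auto
      moreover have "c3 = 0 \<or> c3 = c1 + c2 - 0"
        using uniq2[OF assms(1,2) q(3), of 0 c3] q by simp
      ultimately have c3: "c3 = c1 + c2" by simp
      have h1: "N (0 - (c1 + c2)) = d" using c3n c3 nm[of "c1 + c2"] by simp
      have h2: "N (c1 - (c1 + c2)) = d" using q(2) nm[of c2] by simp
      have h3: "N (0 - c1) = d" "N (0 - c2) = d" using q(1,2) nm[of c1] nm[of c2] by simp_all
      have "c1 + c2 = c2 \<or> c1 + c2 = 0 + c1 - c2"
        using uniq2[OF assms(1,2) h3(1) h3(2) q(3) h1 h2] .
      moreover have "c1 \<noteq> 0" "c2 \<noteq> 0" using q(1,2) assms(2) nN0[OF nN] by auto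
      ultimately show False by (auto simp: vec_eq_iff)
    qed
    ultimately show "b3 = b1 + b2" by simp
  qed
qed

end
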